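(* Let $\nu>0$, $L>0$, $T>0$, and let $u(x,t)$ and $f(x,t)$ be smooth vector fields on $\mathbb{R}^3\times[0,T]$, periodic of period $L$ in each coordinate direction ($u$ need not be divergence-free). Let $\Gamma=\partial_t+u\cdot\nabla-\nu\Delta$, acting componentwise. Let $\ell$ be a smooth $L$-periodic vector field solving $$(\partial_t+u\cdot\nabla-\nu\Delta)\ell+u=0,$$ put $A=x+\ell$, let $(\nabla A)_{mj}=\partial_jA^m$, assume $\nabla A$ is invertible everywhere, let $Q=(\nabla A)^{-1}$ and $C_{m,k;i}=Q_{ji}\partial_j\partial_kA^m$. Let $v$ be a smooth $L$-periodic vector field solving $$\Gamma v_i=2\nu\, C_{m,k;i}\,\partial_k v_m+Q_{ji}f_j,\qquad i=1,2,3.$$ Define $w_i=(\partial_iA^m)v_m$. Then $$\Gamma w+(\nabla u)^*w=f,$$ i.e. $\Gamma w_i+(\partial_i u_j)w_j=f_i$ for $i=1,2,3$.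
   Context: Repeated indices are summed over $\{1,2,3\}$. $(\nabla u)^*$ denotes the transpose of the matrix $(\nabla u)_{jk}=\partial_k u_j$. *)

theory Defs
  imports "HOL-Analysis.Analysis"
begin

text \<open>C-infinity: differentiable everywhere, and every directional derivative is again C-infinity.\<close>
coinductive smooth_fun :: "('a::real_normed_vector \<Rightarrow> 'b::real_normed_vector) \<Rightarrow> bool" where
  "(\<forall>p. g differentiable at p) \<Longrightarrow> (\<forall>h. smooth_fun (\<lambda>p. frechet_derivative g (at p) h))
     \<Longrightarrow> smooth_fun g"

definition smooth_field :: "(real^3 \<Rightarrow> real \<Rightarrow> 'b::real_normed_vector) \<Rightarrow> bool" where
  "smooth_field g \<longleftrightarrow> smooth_fun (\<lambda>p::(real^3) \<times> real. g (fst p) (snd p))"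

definition periodic_field :: "real \<Rightarrow> (real^3 \<Rightarrow> real \<Rightarrow> 'b) \<Rightarrow> bool" where
  "periodic_field L g \<longleftrightarrow> (\<forall>j x t. g (x + L *\<^sub>R axis j 1) t = g x t)"

definition comp :: "(real^3 \<Rightarrow> real \<Rightarrow> real^3) \<Rightarrow> 3 \<Rightarrow> real^3 \<Rightarrow> real \<Rightarrow> real" where
  "comp g i = (\<lambda>x t. g x t $ i)"

definition pdx :: "3 \<Rightarrow> (real^3 \<Rightarrow> real \<Rightarrow> real) \<Rightarrow> real^3 \<Rightarrow> real \<Rightarrow> real" where
  "pdx j g = (\<lambda>x t. deriv (\<lambda>s. g (x + s *\<^sub>R axis j 1) t) 0)"

definition pdt :: "(real^3 \<Rightarrow> real \<Rightarrow> real) \<Rightarrow> real^3 \<Rightarrow> real \<Rightarrow> real" where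
  "pdt g = (\<lambda>x t. deriv (\<lambda>s. g x s) t)"

definition lap :: "(real^3 \<Rightarrow> real \<Rightarrow> real) \<Rightarrow> real^3 \<Rightarrow> real \<Rightarrow> real" where
  "lap g = (\<lambda>x t. \<Sum>j\<in>UNIV. pdx j (pdx j g) x t)"

definition Gam :: "real \<Rightarrow> (real^3 \<Rightarrow> real \<Rightarrow> real^3) \<Rightarrow> (real^3 \<Rightarrow> real \<Rightarrow> real) \<Rightarrow> real^3 \<Rightarrow> real \<Rightarrow> real" where
  "Gam \<nu> u g = (\<lambda>x t. pdt g x t + (\<Sum>j\<in>UNIV. u x t $ j * pdx j g x t) - \<nu> * lap g x t)"

definition Afield :: "(real^3 \<Rightarrow> real \<Rightarrow> real^3) \<Rightarrow> real^3 \<Rightarrow> real \<Rightarrow> real^3" where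
  "Afield ell = (\<lambda>x t. x + ell x t)"

definition gradA :: "(real^3 \<Rightarrow> real \<Rightarrow> real^3) \<Rightarrow> real^3 \<Rightarrow> real \<Rightarrow> real^3^3" where
  "gradA ell x t = (\<chi> m j. pdx j (comp (Afield ell) m) x t)"

definition Qm :: "(real^3 \<Rightarrow> real \<Rightarrow> real^3) \<Rightarrow> real^3 \<Rightarrow> real \<Rightarrow> real^3^3" where
  "Qm ell x t = matrix_inv (gradA ell x t)"

definition Cc :: "(real^3 \<Rightarrow> real \<Rightarrow> real^3) \<Rightarrow> 3 \<Rightarrow> 3 \<Rightarrow> 3 \<Rightarrow> real^3 \<Rightarrow> real \<Rightarrow> real" where
  "Cc ell m k i x t = (\<Sum>j\<in>UNIV. Qm ell x t $ j $ i * pdx j (pdx k (comp (Afield ell) m)) x t)"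

end

theory Submission
  imports Defs
begin

definition DD :: "'a::real_normed_vector \<Rightarrow> ('a \<Rightarrow> 'b::real_normed_vector) \<Rightarrow> 'a \<Rightarrow> 'b" where
  "DD h G p = frechet_derivative G (at p) h"

lemma sm_diff: "smooth_fun G \<Longrightarrow> G differentiable at p"
  by (erule smooth_fun.cases) auto

lemma sm_DD: "smooth_fun G \<Longrightarrow> smooth_fun (DD h G)"
  unfolding DD_def by (erule smooth_fun.cases) auto

lemma DD_hasderiv: "G differentiable at p \<Longrightarrow> (G has_derivative (\<lambda>h. DD h G p)) (at p)"
  unfolding DD_def using frechet_derivative_works by (metis eta_contract_eq)

lemma DD_eq: "(G has_derivative G') (at p) \<Longrightarrow> DD h G p = G' h"
  unfolding DD_def using frechet_derivative_at by metis

lemma DD_add: "f differentiable at p \<Longrightarrow> g differentiable at p \<Longrightarrow>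
   DD h (\<lambda>q. f q + g q) p = DD h f p + DD h g p"
  by (rule DD_eq) (intro has_derivative_add DD_hasderiv)

lemma DD_diff: "f differentiable at p \<Longrightarrow> g differentiable at p \<Longrightarrow>
   DD h (\<lambda>q. f q - g q) p = DD h f p - DD h g p"
  by (rule DD_eq) (intro has_derivative_diff DD_hasderiv)

lemma DD_mult: 
  fixes f g :: "'a::real_normed_vector \<Rightarrow> real"
  shows "f differentiable at p \<Longrightarrow> g differentiable at p \<Longrightarrow>
   DD h (\<lambda>q. f q * g q) p = f p * DD h g p + DD h f p * g p"
  by (rule DD_eq) (intro has_derivative_mult DD_hasderiv)

lemma DD_const: "DD h (\<lambda>q. c) p = 0"
  by (rule DD_eq) (rule has_derivative_const)

lemma DD_sum: 
  fixes f :: "'i \<Rightarrow> 'a::real_normed_vector \<Rightarrow> 'b::real_normed_vector"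
  shows "finite I \<Longrightarrow> (\<And>i. i \<in> I \<Longrightarrow> f i differentiable at p) \<Longrightarrow>
   DD h (\<lambda>q. \<Sum>i\<in>I. f i q) p = (\<Sum>i\<in>I. DD h (f i) p)"
  apply (rule DD_eq) 
  apply (rule has_derivative_sum) 
  by (auto intro: DD_hasderiv)

lemma DD_lin: "bounded_linear f \<Longrightarrow> DD h f p = f h"
  by (rule DD_eq) (rule bounded_linear_imp_has_derivative)

inductive smcl :: "('a::real_normed_vector \<Rightarrow> real) \<Rightarrow> bool" where
  base: "smooth_fun f \<Longrightarrow> smcl f"
| lin: "bounded_linear f \<Longrightarrow> smcl f"
| const: "smcl (\<lambda>_. c)"
| add: "smcl f \<Longrightarrow> smcl g \<Longrightarrow> smcl (\<lambda>x. f x + g x)"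
| diff: "smcl f \<Longrightarrow> smcl g \<Longrightarrow> smcl (\<lambda>x. f x - g x)"
| mult: "smcl f \<Longrightarrow> smcl g \<Longrightarrow> smcl (\<lambda>x. f x * g x)"

lemma smcl_step: "smcl f \<Longrightarrow> (\<forall>p. f differentiable at p) \<and> (\<forall>h. smcl (DD h f))"
proof (induction rule: smcl.induct)
  case (base f)
  then show ?case using sm_diff sm_DD smcl.base by blast
next
  case (lin f)
  then show ?case by (auto simp: DD_lin bounded_linear_imp_differentiable intro: smcl.const)
next
  case (const c)
  then show ?case by (auto simp: DD_const intro: smcl.const)
next
  case (add f g)
  have "DD h (\<lambda>x. f x + g x) = (\<lambda>q. DD h f q + DD h g q)" for h
    using add by (intro ext DD_add) auto
  then show ?case using add by (auto intro!: smcl.add)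
next
  case (diff f g)
  have "DD h (\<lambda>x. f x - g x) = (\<lambda>q. DD h f q - DD h g q)" for h
    using diff by (intro ext DD_diff) auto
  then show ?case using diff by (auto intro!: smcl.diff)
next
  case (mult f g)
  have "DD h (\<lambda>x. f x * g x) = (\<lambda>q. f q * DD h g q + DD h f q * g q)" for h
    using mult by (intro ext DD_mult) auto
  then show ?case using mult by (auto intro!: smcl.add smcl.mult)
qed

lemma smcl_smooth: "smcl f \<Longrightarrow> smooth_fun f"
proof (coinduction arbitrary: f rule: smooth_fun.coinduct)
  case (smooth_fun f)
  then show ?case using smcl_step unfolding DD_def by blast
qed

lemma smooth_lin_comp:
  assumes "smooth_fun G" "bounded_linear L"
  shows "smooth_fun (\<lambda>p. L (G p))"
  using assms
proof (coinduction arbitrary: G rule: smooth_fun.coinduct)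
  case (smooth_fun G)
  have d: "(\<lambda>p. L (G p)) differentiable at p" for p
    using differentiable_chain_at[OF sm_diff[OF smooth_fun(1)] bounded_linear_imp_differentiable[OF smooth_fun(2)]]
    by (simp add: o_def)
  have e: "frechet_derivative (\<lambda>p. L (G p)) (at p) h = L (DD h G p)" for p h
    using DD_eq[of "\<lambda>p. L (G p)" _ p h, unfolded DD_def] 
      bounded_linear.has_derivative[OF smooth_fun(2) DD_hasderiv[OF sm_diff[OF smooth_fun(1)]]]
    by (simp add: DD_def) blast
  show ?case
    apply (rule exI[of _ "\<lambda>p. L (G p)"])
    apply (intro conjI allI refl d disjI1)
    subgoal for h
      apply (rule exI[of _ "DD h G"])
      using e smooth_fun sm_DD by (auto simp: fun_eq_iff)
    done
qed

lemma DD_scale: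
  assumes "G differentiable at q"
  shows "DD (c *\<^sub>R h) G q = c *\<^sub>R DD h G q"
  using linear_frechet_derivative[OF assms] unfolding DD_def by (simp add: linear_scale)

lemma line_deriv:
  fixes G :: "'a::real_normed_vector \<Rightarrow> real"
  assumes "G differentiable at (p + s *\<^sub>R h)"
  shows "((\<lambda>s. G (p + s *\<^sub>R h)) has_real_derivative DD h G (p + s *\<^sub>R h)) (at s)"
proof -
  have 1: "((\<lambda>s. p + s *\<^sub>R h) has_derivative (\<lambda>s. s *\<^sub>R h)) (at s)"
    by (auto intro!: derivative_eq_intros)
  have 2: "(G has_derivative (\<lambda>k. DD k G (p + s *\<^sub>R h))) (at (p + s *\<^sub>R h))"
    using DD_hasderiv[OF assms] .
  have "((\<lambda>s. G (p + s *\<^sub>R h)) has_derivative (\<lambda>c. DD (c *\<^sub>R h) G (p + s *\<^sub>R h))) (at s)"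
    using diff_chain_at[OF 1 2] by (simp add: o_def)
  moreover have "(\<lambda>c. DD (c *\<^sub>R h) G (p + s *\<^sub>R h)) = (*) (DD h G (p + s *\<^sub>R h))"
    using DD_scale[OF assms] by (auto simp: fun_eq_iff)
  ultimately show ?thesis by (simp add: has_field_derivative_def)
qed

lemma DD_zero_line:
  fixes H :: "'a::real_normed_vector \<Rightarrow> real"
  assumes "H differentiable at p" "\<And>s. H (p + s *\<^sub>R h) = 0"
  shows "DD h H p = 0"
proof -
  have "((\<lambda>s. H (p + s *\<^sub>R h)) has_real_derivative DD h H p) (at 0)"
    using line_deriv[of H p 0 h] assms(1) by simp
  moreover have "((\<lambda>s. H (p + s *\<^sub>R h)) has_real_derivative 0) (at 0)"
    using assms(2) by simp
  ultimately show ?thesis using DERIV_unique by blast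
qed

lemma schwarz_half:
  fixes G :: "'a::real_normed_vector \<Rightarrow> real"
  assumes G: "smooth_fun G" and e: "e > 0"
  shows "\<exists>q. norm (q - p) \<le> e * (norm h + norm k) \<and>
     G (p + e *\<^sub>R h + e *\<^sub>R k) - G (p + e *\<^sub>R h) - G (p + e *\<^sub>R k) + G p
       = e * e * DD k (DD h G) q"
proof -
  define \<alpha> where "\<alpha> s = G ((p + e *\<^sub>R k) + s *\<^sub>R h) - G (p + s *\<^sub>R h)" for s
  have "\<And>s. (\<alpha> has_real_derivative (DD h G ((p + e *\<^sub>R k) + s *\<^sub>R h) - DD h G (p + s *\<^sub>R h))) (at s)"
    unfolding \<alpha>_def by (intro DERIV_diff line_deriv sm_diff[OF G])
  then obtain \<sigma> where s: "0 < \<sigma>" "\<sigma> < e" and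
    s2: "\<alpha> e - \<alpha> 0 = (e - 0) * (DD h G ((p + e *\<^sub>R k) + \<sigma> *\<^sub>R h) - DD h G (p + \<sigma> *\<^sub>R h))"
    using MVT2[OF e, of \<alpha> "\<lambda>s. DD h G ((p + e *\<^sub>R k) + s *\<^sub>R h) - DD h G (p + s *\<^sub>R h)"] by blast
  define \<beta> where "\<beta> r = DD h G ((p + \<sigma> *\<^sub>R h) + r *\<^sub>R k)" for r
  have "\<And>r. (\<beta> has_real_derivative DD k (DD h G) ((p + \<sigma> *\<^sub>R h) + r *\<^sub>R k)) (at r)"
    unfolding \<beta>_def by (intro line_deriv sm_diff sm_DD G)
  then obtain \<rho> where r: "0 < \<rho>" "\<rho> < e" and
    r2: "\<beta> e - \<beta> 0 = (e - 0) * DD k (DD h G) ((p + \<sigma> *\<^sub>R h) + \<rho> *\<^sub>R k)"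
    using MVT2[OF e, of \<beta> "\<lambda>r. DD k (DD h G) ((p + \<sigma> *\<^sub>R h) + r *\<^sub>R k)"] by blast
  define q where "q = (p + \<sigma> *\<^sub>R h) + \<rho> *\<^sub>R k"
  have "norm (q - p) \<le> norm (\<sigma> *\<^sub>R h) + norm (\<rho> *\<^sub>R k)"
    unfolding q_def by (metis add_diff_cancel_left' add.assoc norm_triangle_ineq)
  also have "\<dots> = \<sigma> * norm h + \<rho> * norm k" using s r by simp
  also have "\<dots> \<le> e * norm h + e * norm k"
    using s r by (intro add_mono mult_right_mono) auto
  finally have nq: "norm (q - p) \<le> e * (norm h + norm k)" by (simp add: algebra_simps)
  have "G (p + e *\<^sub>R h + e *\<^sub>R k) - G (p + e *\<^sub>R h) - G (p + e *\<^sub>R k) + G p = \<alpha> e - \<alpha> 0"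
    unfolding \<alpha>_def by (simp add: algebra_simps)
  also have "\<dots> = e * (\<beta> e - \<beta> 0)"
    using s2 unfolding \<beta>_def by (simp add: algebra_simps)
  also have "\<dots> = e * e * DD k (DD h G) q"
    using r2 unfolding q_def by simp
  finally show ?thesis using nq by blast
qed

lemma schwarz:
  fixes G :: "'a::real_normed_vector \<Rightarrow> real"
  assumes G: "smooth_fun G"
  shows "DD h (DD k G) p = DD k (DD h G) p"
proof (rule ccontr)
  assume ne: "DD h (DD k G) p \<noteq> DD k (DD h G) p"
  define a where "a = DD k (DD h G) p"
  define b where "b = DD h (DD k G) p"
  define \<epsilon> where "\<epsilon> = \<bar>a - b\<bar> / 2"
  have \<epsilon>: "\<epsilon> > 0" using ne unfolding \<epsilon>_def a_def b_def by simp
  have ca: "isCont (DD k (DD h G)) p" and cb: "isCont (DD h (DD k G)) p"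
    by (intro differentiable_imp_continuous_within sm_diff sm_DD G)+
  obtain d1 where d1: "d1 > 0" "\<And>y. dist y p < d1 \<Longrightarrow> dist (DD k (DD h G) y) a < \<epsilon>"
    using ca \<epsilon> unfolding continuous_at_eps_delta a_def by blast
  obtain d2 where d2: "d2 > 0" "\<And>y. dist y p < d2 \<Longrightarrow> dist (DD h (DD k G) y) b < \<epsilon>"
    using cb \<epsilon> unfolding continuous_at_eps_delta b_def by blast
  define e where "e = min d1 d2 / (2 * (norm h + norm k + 1))"
  have pos: "2 * (norm h + norm k + 1) > 0" by (smt (verit) norm_ge_zero)
  have e: "e > 0" using d1 d2 pos unfolding e_def by (intro divide_pos_pos) auto
  have small: "e * (norm h + norm k) < min d1 d2"
  proof -
    have "e * (norm h + norm k) \<le> e * (norm h + norm k + 1)" using e by simp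
    also have "\<dots> = min d1 d2 / 2" unfolding e_def
      using pos by (simp add: field_simps)
    also have "\<dots> < min d1 d2" using d1 d2 by (simp add: min_def)
    finally show ?thesis .
  qed
  obtain q1 where q1: "norm (q1 - p) \<le> e * (norm h + norm k)"
    "G (p + e *\<^sub>R h + e *\<^sub>R k) - G (p + e *\<^sub>R h) - G (p + e *\<^sub>R k) + G p = e * e * DD k (DD h G) q1"
    using schwarz_half[OF G e, of p h k] by blast
  obtain q2 where q2: "norm (q2 - p) \<le> e * (norm k + norm h)"
    "G (p + e *\<^sub>R k + e *\<^sub>R h) - G (p + e *\<^sub>R k) - G (p + e *\<^sub>R h) + G p = e * e * DD h (DD k G) q2"
    using schwarz_half[OF G e, of p k h] by blast
  have "e * e * DD k (DD h G) q1 = e * e * DD h (DD k G) q2"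
    using q1(2) q2(2) by (simp add: algebra_simps)
  hence eq: "DD k (DD h G) q1 = DD h (DD k G) q2" using e by simp
  have "dist q1 p < d1" "dist q2 p < d2" using q1(1) q2(1) small by (auto simp: dist_norm add.commute)
  hence "\<bar>DD k (DD h G) q1 - a\<bar> < \<epsilon>" "\<bar>DD h (DD k G) q2 - b\<bar> < \<epsilon>"
    using d1 d2 by (auto simp: dist_real_def)
  moreover have "\<And>c a b :: real. \<bar>c - a\<bar> < \<bar>a - b\<bar> / 2 \<Longrightarrow> \<bar>c - b\<bar> < \<bar>a - b\<bar> / 2 \<Longrightarrow> False"
    by (simp add: abs_if split: if_splits)
  ultimately show False using eq unfolding \<epsilon>_def by metis
qed


lemma sm_add: "smooth_fun (f::'a::real_normed_vector \<Rightarrow> real) \<Longrightarrow> smooth_fun g \<Longrightarrow> smooth_fun (\<lambda>x. f x + g x)"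
  by (rule smcl_smooth, rule smcl.add; rule smcl.base)
lemma sm_sub: "smooth_fun (f::'a::real_normed_vector \<Rightarrow> real) \<Longrightarrow> smooth_fun g \<Longrightarrow> smooth_fun (\<lambda>x. f x - g x)"
  by (rule smcl_smooth, rule smcl.diff; rule smcl.base)
lemma sm_mult: "smooth_fun (f::'a::real_normed_vector \<Rightarrow> real) \<Longrightarrow> smooth_fun g \<Longrightarrow> smooth_fun (\<lambda>x. f x * g x)"
  by (rule smcl_smooth, rule smcl.mult; rule smcl.base)
lemma sm_const: "smooth_fun (\<lambda>x::'a::real_normed_vector. c::real)"
  by (rule smcl_smooth, rule smcl.const)
lemma sm_cmult: "smooth_fun (f::'a::real_normed_vector \<Rightarrow> real) \<Longrightarrow> smooth_fun (\<lambda>x. c * f x)"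
  by (rule smcl_smooth, rule smcl.mult, rule smcl.const, rule smcl.base)
lemma sm_lin: "bounded_linear (f::'a::real_normed_vector \<Rightarrow> real) \<Longrightarrow> smooth_fun f"
  by (rule smcl_smooth, rule smcl.lin)
lemma sm_sum: 
  fixes f :: "'i \<Rightarrow> 'a::real_normed_vector \<Rightarrow> real"
  shows "finite I \<Longrightarrow> (\<And>i. i \<in> I \<Longrightarrow> smooth_fun (f i)) \<Longrightarrow> smooth_fun (\<lambda>x. \<Sum>i\<in>I. f i x)"
proof (induction I rule: finite_induct)
  case empty
  then show ?case using sm_const by simp
next
  case (insert a F)
  then show ?case by (simp add: sm_add)
qed

lemmas sm_intros = sm_add sm_sub sm_mult sm_const sm_cmult sm_sum sm_DD

lemma fDD_add: "smooth_fun (f::'a::real_normed_vector \<Rightarrow> real) \<Longrightarrow> smooth_fun g \<Longrightarrow>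
  DD h (\<lambda>q. f q + g q) = (\<lambda>q. DD h f q + DD h g q)"
  by (intro ext DD_add sm_diff)
lemma fDD_sub: "smooth_fun (f::'a::real_normed_vector \<Rightarrow> real) \<Longrightarrow> smooth_fun g \<Longrightarrow>
  DD h (\<lambda>q. f q - g q) = (\<lambda>q. DD h f q - DD h g q)"
  by (intro ext DD_diff sm_diff)
lemma fDD_mult: "smooth_fun (f::'a::real_normed_vector \<Rightarrow> real) \<Longrightarrow> smooth_fun g \<Longrightarrow>
  DD h (\<lambda>q. f q * g q) = (\<lambda>q. f q * DD h g q + DD h f q * g q)"
  by (intro ext DD_mult sm_diff)
lemma fDD_cmult: "smooth_fun (f::'a::real_normed_vector \<Rightarrow> real) \<Longrightarrow>
  DD h (\<lambda>q. c * f q) = (\<lambda>q. c * DD h f q)"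
proof -
  assume f: "smooth_fun f"
  have "DD h (\<lambda>q. c * f q) = (\<lambda>q. c * DD h f q + DD h (\<lambda>_. c) q * f q)"
    by (rule fDD_mult[OF sm_const f])
  thus ?thesis by (simp add: DD_const)
qed
lemma fDD_sum: 
  fixes f :: "'i \<Rightarrow> 'a::real_normed_vector \<Rightarrow> real"
  shows "finite I \<Longrightarrow> (\<And>i. i \<in> I \<Longrightarrow> smooth_fun (f i)) \<Longrightarrow>
   DD h (\<lambda>q. \<Sum>i\<in>I. f i q) = (\<lambda>q. \<Sum>i\<in>I. DD h (f i) q)"
  by (intro ext DD_sum sm_diff) auto
lemma fDD_lin: "bounded_linear f \<Longrightarrow> DD h f = (\<lambda>q. f h)"
  by (intro ext DD_lin)
lemma fDD_const: "DD h (\<lambda>q. c) = (\<lambda>q. 0)"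
  by (intro ext DD_const)

lemma schwarz_fun: "smooth_fun (G::'a::real_normed_vector \<Rightarrow> real) \<Longrightarrow> DD h (DD k G) = DD k (DD h G)"
  by (intro ext schwarz)

type_synonym P = "(real^3) \<times> real"

definition U :: "(real^3 \<Rightarrow> real \<Rightarrow> real) \<Rightarrow> P \<Rightarrow> real" where
  "U g q = g (fst q) (snd q)"

definition ei :: "3 \<Rightarrow> P" where "ei j = (axis j 1, 0)"
definition e0 :: P where "e0 = (0, 1)"

lemma pdx_DD:
  assumes "U g differentiable at (x, t)"
  shows "pdx j g x t = DD (ei j) (U g) (x, t)"
proof -
  have eq: "(\<lambda>s. g (x + s *\<^sub>R axis j 1) t) = (\<lambda>s. U g ((x, t) + s *\<^sub>R ei j))"
    by (simp add: U_def ei_def)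
  show ?thesis unfolding pdx_def eq
    by (rule DERIV_imp_deriv) (use line_deriv[of "U g" "(x,t)" 0 "ei j"] assms in simp)
qed

lemma pdt_DD:
  assumes "U g differentiable at (x, t)"
  shows "pdt g x t = DD e0 (U g) (x, t)"
proof -
  have eq: "(\<lambda>s. g x s) = (\<lambda>s. U g ((x, 0) + s *\<^sub>R e0))"
    by (simp add: U_def e0_def)
  show ?thesis unfolding pdt_def eq
    by (rule DERIV_imp_deriv) (use line_deriv[of "U g" "(x,0)" t e0] assms in \<open>simp add: e0_def\<close>)
qed

lemma U_pdx: "smooth_fun (U g) \<Longrightarrow> U (pdx j g) = DD (ei j) (U g)"
proof
  fix q :: P
  assume g: "smooth_fun (U g)"
  obtain x t where q: "q = (x, t)" by fastforce
  show "U (pdx j g) q = DD (ei j) (U g) q"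
    unfolding q using pdx_DD[OF sm_diff[OF g]] by (simp add: U_def)
qed

lemma pdx2: "smooth_fun (U g) \<Longrightarrow> pdx j (pdx k g) x t = DD (ei j) (DD (ei k) (U g)) (x, t)"
proof -
  assume g: "smooth_fun (U g)"
  have "pdx j (pdx k g) x t = DD (ei j) (U (pdx k g)) (x, t)"
    using U_pdx[OF g] sm_diff[OF sm_DD[OF g]] by (intro pdx_DD) simp
  thus ?thesis using U_pdx[OF g] by simp
qed

definition GG :: "real \<Rightarrow> (3 \<Rightarrow> P \<Rightarrow> real) \<Rightarrow> (P \<Rightarrow> real) \<Rightarrow> P \<Rightarrow> real" where
  "GG \<nu> UU H = (\<lambda>q. DD e0 H q + (\<Sum>j\<in>UNIV. UU j q * DD (ei j) H q) - \<nu> * (\<Sum>j\<in>UNIV. DD (ei j) (DD (ei j) H) q))"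

lemma Gam_GG:
  assumes "smooth_fun (U g)"
  shows "Gam \<nu> u g x t = GG \<nu> (\<lambda>j. U (comp u j)) (U g) (x, t)"
proof -
  have "pdt g x t = DD e0 (U g) (x,t)" using assms by (simp add: pdt_DD sm_diff)
  moreover have "\<And>j. pdx j g x t = DD (ei j) (U g) (x,t)" using assms by (simp add: pdx_DD sm_diff)
  moreover have "\<And>j. pdx j (pdx j g) x t = DD (ei j) (DD (ei j) (U g)) (x,t)" using assms by (rule pdx2)
  moreover have "\<And>j. u x t $ j = U (comp u j) (x, t)" by (simp add: U_def Defs.comp_def)
  ultimately show ?thesis unfolding Gam_def GG_def lap_def by simp
qed

lemma GG_smooth:
  assumes "\<And>j. smooth_fun (UU j)" "smooth_fun H"
  shows "smooth_fun (GG \<nu> UU H)"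
  unfolding GG_def
  apply (intro sm_sub sm_add sm_cmult sm_sum sm_mult sm_DD assms)
  by auto



lemma sm_sumU: fixes f :: "'i::finite \<Rightarrow> 'a::real_normed_vector \<Rightarrow> real" assumes "\<And>j. smooth_fun (f j)" shows "smooth_fun (\<lambda>q. \<Sum>j\<in>(UNIV::'i::finite set). f j q)"
  using assms by (intro sm_sum) auto

lemma fDD_sumU: fixes f :: "'i::finite \<Rightarrow> 'a::real_normed_vector \<Rightarrow> real" assumes "\<And>j. smooth_fun (f j)" shows "DD h (\<lambda>q. \<Sum>j\<in>(UNIV::'i::finite set). f j q) = (\<lambda>q. \<Sum>j\<in>UNIV. DD h (f j) q)"
  using assms by (intro fDD_sum) auto

lemma DD_GG:
  assumes UU: "\<And>j. smooth_fun (UU j)" and H: "smooth_fun H"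
  shows "DD h (GG \<nu> UU H) = (\<lambda>q. DD h (DD e0 H) q
      + (\<Sum>j\<in>UNIV. UU j q * DD h (DD (ei j) H) q + DD h (UU j) q * DD (ei j) H q)
      - \<nu> * (\<Sum>j\<in>UNIV. DD h (DD (ei j) (DD (ei j) H)) q))"
proof -
  have sS: "smooth_fun (\<lambda>q. \<Sum>j\<in>UNIV. UU j q * DD (ei j) H q)"
    by (rule sm_sumU, rule sm_mult, rule UU, rule sm_DD, rule H)
  have sT: "smooth_fun (\<lambda>q. \<Sum>j\<in>UNIV. DD (ei j) (DD (ei j) H) q)"
    by (rule sm_sumU, rule sm_DD, rule sm_DD, rule H)
  have e1: "DD h (GG \<nu> UU H) = (\<lambda>q. DD h (DD e0 H) q + DD h (\<lambda>q. \<Sum>j\<in>UNIV. UU j q * DD (ei j) H q) q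
       - \<nu> * DD h (\<lambda>q. \<Sum>j\<in>UNIV. DD (ei j) (DD (ei j) H) q) q)"
    unfolding GG_def fDD_sub[OF sm_add[OF sm_DD[OF H] sS] sm_cmult[OF sT]] 
      fDD_add[OF sm_DD[OF H] sS] fDD_cmult[OF sT] ..
  have e2: "DD h (\<lambda>q. \<Sum>j\<in>UNIV. UU j q * DD (ei j) H q) = (\<lambda>q. \<Sum>j\<in>UNIV. UU j q * DD h (DD (ei j) H) q + DD h (UU j) q * DD (ei j) H q)"
    by (subst fDD_sumU, rule sm_mult, rule UU, rule sm_DD, rule H) (simp only: fDD_mult[OF UU sm_DD[OF H]])
  have e3: "DD h (\<lambda>q. \<Sum>j\<in>UNIV. DD (ei j) (DD (ei j) H) q) = (\<lambda>q. \<Sum>j\<in>UNIV. DD h (DD (ei j) (DD (ei j) H)) q)"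
    by (rule fDD_sumU, rule sm_DD, rule sm_DD, rule H)
  show ?thesis unfolding e1 e2 e3 ..
qed

lemma K1:
  assumes UU: "\<And>j. smooth_fun (UU j)" and H: "smooth_fun H"
  shows "DD (ei i) (GG \<nu> UU H) p = GG \<nu> UU (DD (ei i) H) p + (\<Sum>j\<in>UNIV. DD (ei i) (UU j) p * DD (ei j) H p)"
proof -
  have "DD (ei i) (DD e0 H) = DD e0 (DD (ei i) H)" using H by (rule schwarz_fun)
  moreover have "\<And>j. DD (ei i) (DD (ei j) H) = DD (ei j) (DD (ei i) H)" using H by (rule schwarz_fun)
  moreover have "\<And>j. DD (ei i) (DD (ei j) (DD (ei j) H)) = DD (ei j) (DD (ei j) (DD (ei i) H))"
    using H by (metis schwarz_fun sm_DD)
  ultimately show ?thesis unfolding DD_GG[OF UU H] unfolding GG_def by (simp add: sum_3 algebra_simps)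
qed

lemma K2:
  assumes UU: "\<And>j. smooth_fun (UU j)" and B: "smooth_fun B" and V: "smooth_fun V"
  shows "GG \<nu> UU (\<lambda>q. B q * V q) p = GG \<nu> UU B p * V p + B p * GG \<nu> UU V p
     - 2 * \<nu> * (\<Sum>k\<in>UNIV. DD (ei k) B p * DD (ei k) V p)"
proof -
  have d1: "\<And>h. DD h (\<lambda>q. B q * V q) = (\<lambda>q. B q * DD h V q + DD h B q * V q)"
    using B V by (rule fDD_mult)
  have d2: "\<And>h k. DD k (\<lambda>q. B q * DD h V q + DD h B q * V q) = 
      (\<lambda>q. (B q * DD k (DD h V) q + DD k B q * DD h V q) + (DD h B q * DD k V q + DD k (DD h B) q * V q))"
    unfolding fDD_add[OF sm_mult[OF B sm_DD[OF V]] sm_mult[OF sm_DD[OF B] V]]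
      fDD_mult[OF B sm_DD[OF V]] fDD_mult[OF sm_DD[OF B] V] ..
  show ?thesis unfolding GG_def d1 d2 by (simp add: sum_3 algebra_simps)
qed

lemma K3:
  assumes UU: "\<And>j. smooth_fun (UU j)" and f: "\<And>m. smooth_fun (f m)"
  shows "GG \<nu> UU (\<lambda>q. \<Sum>m\<in>(UNIV::3 set). f m q) p = (\<Sum>m\<in>UNIV. GG \<nu> UU (f m) p)"
proof -
  have d1: "\<And>h. DD h (\<lambda>q. \<Sum>m\<in>(UNIV::3 set). f m q) = (\<lambda>q. \<Sum>m\<in>UNIV. DD h (f m) q)"
    using f by (rule fDD_sumU)
  have d2: "\<And>h. DD h (\<lambda>q. \<Sum>m\<in>(UNIV::3 set). DD h (f m) q) = (\<lambda>q. \<Sum>m\<in>UNIV. DD h (DD h (f m)) q)"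
    using f by (intro fDD_sumU sm_DD)
  show ?thesis unfolding GG_def d1 d2 by (simp add: sum_3 algebra_simps)
qed

lemma blin_coord: "bounded_linear (\<lambda>q::P. fst q $ m)"
  by (rule bounded_linear_compose[OF bounded_linear_vec_nth bounded_linear_fst])

lemma K4:
  assumes UU: "\<And>j. smooth_fun (UU j)" and L: "smooth_fun L"
  shows "GG \<nu> UU (\<lambda>q. fst q $ m + L q) p = GG \<nu> UU L p + UU m p"
proof -
  have d1: "\<And>h. DD h (\<lambda>q. fst q $ m + L q) = (\<lambda>q. fst h $ m + DD h L q)"
    using fDD_add[OF sm_lin[OF blin_coord] L] fDD_lin[OF blin_coord] by simp
  have d2: "\<And>h. DD h (\<lambda>q. fst h $ m + DD h L q) = (\<lambda>q. DD h (DD h L) q)"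
    using fDD_add[OF sm_const sm_DD[OF L]] by (simp add: fDD_const)
  have e: "\<And>j. fst (ei j) $ m = (if j = m then 1 else 0)" by (simp add: ei_def axis_def)
  have "GG \<nu> UU (\<lambda>q. fst q $ m + L q) p = fst e0 $ m + DD e0 L p + (\<Sum>j\<in>UNIV. UU j p * (fst (ei j) $ m + DD (ei j) L p))
     - \<nu> * (\<Sum>j\<in>UNIV. DD (ei j) (DD (ei j) L) p)"
    unfolding GG_def d1 d2 ..
  also have "\<dots> = GG \<nu> UU L p + UU m p"
  proof -
    have "(\<Sum>j\<in>UNIV. UU j p * (fst (ei j) $ m)) = (\<Sum>j\<in>UNIV. if j = m then UU j p else 0)"
      by (rule sum.cong) (auto simp: e)
    hence "(\<Sum>j\<in>UNIV. UU j p * (fst (ei j) $ m)) = UU m p" by simp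
    thus ?thesis unfolding GG_def by (simp add: e0_def distrib_left sum.distrib)
  qed
  finally show ?thesis .
qed

lemma comp_smooth: "smooth_field g \<Longrightarrow> smooth_fun (U (comp g j))"
proof -
  assume g: "smooth_field g"
  have "U (comp g j) = (\<lambda>q. (\<lambda>y. y $ j) ((\<lambda>p. g (fst p) (snd p)) q))"
    by (simp add: fun_eq_iff U_def Defs.comp_def)
  thus ?thesis using smooth_lin_comp[OF g[unfolded smooth_field_def] bounded_linear_vec_nth] by simp
qed

lemma matrix_inv_left': "invertible (A::real^3^3) \<Longrightarrow> matrix_inv A ** A = mat 1"
  unfolding matrix_inv_def invertible_def by (rule someI2_ex) auto

lemma delta_sum:
  fixes Z :: "3 \<Rightarrow> real"
  shows "(\<Sum>j\<in>UNIV. (if j = i then 1 else 0) * Z j) = Z i"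
proof -
  have "(\<Sum>j\<in>UNIV. (if j = i then 1 else 0) * Z j) = (\<Sum>j\<in>UNIV. if j = i then Z j else 0)"
    by (rule sum.cong) auto
  thus ?thesis by simp
qed

lemma alg2:
  fixes M Q :: "3 \<Rightarrow> 3 \<Rightarrow> real" and X :: "3 \<Rightarrow> 3 \<Rightarrow> 3 \<Rightarrow> real" and Y :: "3 \<Rightarrow> 3 \<Rightarrow> real" and F :: "3 \<Rightarrow> real"
  assumes \<delta>: "\<And>j. (\<Sum>m\<in>UNIV. M m i * Q j m) = (if j = i then 1 else 0)"
  shows "(\<Sum>m\<in>UNIV. M m i * (c * (\<Sum>n\<in>UNIV. \<Sum>k\<in>UNIV. (\<Sum>j\<in>UNIV. Q j m * X j k n) * Y k n) + (\<Sum>j\<in>UNIV. Q j m * F j)))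
     = c * (\<Sum>n\<in>UNIV. \<Sum>k\<in>UNIV. X i k n * Y k n) + F i"
proof -
  have A: "(\<Sum>m\<in>UNIV. M m i * (\<Sum>n\<in>UNIV. \<Sum>k\<in>UNIV. (\<Sum>j\<in>UNIV. Q j m * X j k n) * Y k n))
     = (\<Sum>m\<in>UNIV. \<Sum>n\<in>UNIV. \<Sum>k\<in>UNIV. \<Sum>j\<in>UNIV. M m i * Q j m * X j k n * Y k n)"
    by (simp add: sum_distrib_left sum_distrib_right mult.assoc)
  also have "\<dots> = (\<Sum>n\<in>UNIV. \<Sum>m\<in>UNIV. \<Sum>k\<in>UNIV. \<Sum>j\<in>UNIV. M m i * Q j m * X j k n * Y k n)"
    by (rule sum.swap)
  also have "\<dots> = (\<Sum>n\<in>UNIV. \<Sum>k\<in>UNIV. \<Sum>m\<in>UNIV. \<Sum>j\<in>UNIV. M m i * Q j m * X j k n * Y k n)"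
    by (rule sum.cong[OF refl], rule sum.swap)
  also have "\<dots> = (\<Sum>n\<in>UNIV. \<Sum>k\<in>UNIV. \<Sum>j\<in>UNIV. \<Sum>m\<in>UNIV. M m i * Q j m * X j k n * Y k n)"
    by (rule sum.cong[OF refl], rule sum.cong[OF refl], rule sum.swap)
  also have "\<dots> = (\<Sum>n\<in>UNIV. \<Sum>k\<in>UNIV. \<Sum>j\<in>UNIV. (\<Sum>m\<in>UNIV. M m i * Q j m) * (X j k n * Y k n))"
    by (simp add: sum_distrib_right mult.assoc)
  also have "\<dots> = (\<Sum>n\<in>UNIV. \<Sum>k\<in>UNIV. X i k n * Y k n)"
    unfolding \<delta> delta_sum ..
  finally have A: "(\<Sum>m\<in>UNIV. M m i * (\<Sum>n\<in>UNIV. \<Sum>k\<in>UNIV. (\<Sum>j\<in>UNIV. Q j m * X j k n) * Y k n))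
     = (\<Sum>n\<in>UNIV. \<Sum>k\<in>UNIV. X i k n * Y k n)" .
  have "(\<Sum>m\<in>UNIV. M m i * (\<Sum>j\<in>UNIV. Q j m * F j)) = (\<Sum>m\<in>UNIV. \<Sum>j\<in>UNIV. M m i * Q j m * F j)"
    by (simp add: sum_distrib_left mult.assoc)
  also have "\<dots> = (\<Sum>j\<in>UNIV. \<Sum>m\<in>UNIV. M m i * Q j m * F j)"
    by (rule sum.swap)
  also have "\<dots> = (\<Sum>j\<in>UNIV. (\<Sum>m\<in>UNIV. M m i * Q j m) * F j)"
    by (simp add: sum_distrib_right)
  also have "\<dots> = F i" unfolding \<delta> delta_sum ..
  finally have B: "(\<Sum>m\<in>UNIV. M m i * (\<Sum>j\<in>UNIV. Q j m * F j)) = F i" .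
  have "(\<Sum>m\<in>UNIV. M m i * (c * (\<Sum>n\<in>UNIV. \<Sum>k\<in>UNIV. (\<Sum>j\<in>UNIV. Q j m * X j k n) * Y k n) + (\<Sum>j\<in>UNIV. Q j m * F j)))
     = c * (\<Sum>m\<in>UNIV. M m i * (\<Sum>n\<in>UNIV. \<Sum>k\<in>UNIV. (\<Sum>j\<in>UNIV. Q j m * X j k n) * Y k n))
       + (\<Sum>m\<in>UNIV. M m i * (\<Sum>j\<in>UNIV. Q j m * F j))"
    by (simp add: distrib_left sum.distrib sum_distrib_left mult.left_commute)
  thus ?thesis unfolding A B .
qed

theorem proposition3:
  fixes \<nu> L T :: real and u f ell v w :: "real^3 \<Rightarrow> real \<Rightarrow> real^3"
  assumes "\<nu> > 0" "L > 0" "T > 0"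
    and "smooth_field u" "smooth_field f" "smooth_field ell" "smooth_field v"
    and "periodic_field L u" "periodic_field L f" "periodic_field L ell" "periodic_field L v"
    and ell_eq: "\<And>x t i. t \<in> {0..T} \<Longrightarrow> Gam \<nu> u (comp ell i) x t + u x t $ i = 0"
    and inv: "\<And>x t. t \<in> {0..T} \<Longrightarrow> invertible (gradA ell x t)"
    and v_eq: "\<And>x t i. t \<in> {0..T} \<Longrightarrow>
       Gam \<nu> u (comp v i) x t =
         2 * \<nu> * (\<Sum>m\<in>UNIV. \<Sum>k\<in>UNIV. Cc ell m k i x t * pdx k (comp v m) x t)
         + (\<Sum>j\<in>UNIV. Qm ell x t $ j $ i * f x t $ j)"
    and w_def: "\<And>x t i. w x t $ i = (\<Sum>m\<in>UNIV. pdx i (comp (Afield ell) m) x t * v x t $ m)"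
  shows "\<And>x t i. t \<in> {0..T} \<Longrightarrow>
     Gam \<nu> u (comp w i) x t + (\<Sum>j\<in>UNIV. pdx i (comp u j) x t * w x t $ j) = f x t $ i"
proof -
  define UU where "UU = (\<lambda>j. U (comp u j))"
  define Ls where "Ls = (\<lambda>m. U (comp ell m))"
  define Vs where "Vs = (\<lambda>m. U (comp v m))"
  define Fs where "Fs = (\<lambda>m. U (comp f m))"
  define a where "a = (\<lambda>m (q::P). fst q $ m + Ls m q)"
  define W where "W = (\<lambda>i (q::P). \<Sum>m\<in>UNIV. DD (ei i) (a m) q * Vs m q)"
  have sU: "\<And>j. smooth_fun (UU j)" unfolding UU_def using comp_smooth assms(4) by blast
  have sL: "\<And>m. smooth_fun (Ls m)" unfolding Ls_def using comp_smooth assms(6) by blast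
  have sV: "\<And>m. smooth_fun (Vs m)" unfolding Vs_def using comp_smooth assms(7) by blast
  have sa: "\<And>m. smooth_fun (a m)" unfolding a_def using sm_add[OF sm_lin[OF blin_coord] sL] .
  have sW: "\<And>i. smooth_fun (W i)" unfolding W_def
    by (rule sm_sumU, rule sm_mult, rule sm_DD, rule sa, rule sV)
  have hA: "\<And>m. U (comp (Afield ell) m) = a m"
    by (simp add: fun_eq_iff U_def Defs.comp_def Afield_def a_def Ls_def)
  have pdxA: "\<And>j m x t. pdx j (comp (Afield ell) m) x t = DD (ei j) (a m) (x,t)"
    by (subst pdx_DD) (simp_all add: hA sm_diff sa)
  have hW: "U (comp w i) = W i" for i
  proof
    fix q :: P
    have "U (comp w i) q = w (fst q) (snd q) $ i" by (simp add: U_def Defs.comp_def)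
    also have "\<dots> = (\<Sum>m\<in>UNIV. pdx i (comp (Afield ell) m) (fst q) (snd q) * v (fst q) (snd q) $ m)"
      by (rule w_def)
    also have "\<dots> = W i q" unfolding pdxA by (simp add: W_def Vs_def U_def Defs.comp_def)
    finally show "U (comp w i) q = W i q" .
  qed
  have GGa0: "GG \<nu> UU (a m) q = 0" if q: "snd q \<in> {0..T}" for m q
  proof -
    from ell_eq[of "snd q" m "fst q", OF q] 
    have "Gam \<nu> u (comp ell m) (fst q) (snd q) + u (fst q) (snd q) $ m = 0" .
    moreover have "Gam \<nu> u (comp ell m) (fst q) (snd q) = GG \<nu> UU (Ls m) q"
      unfolding UU_def Ls_def using Gam_GG[of "comp ell m" \<nu> u "fst q" "snd q", OF comp_smooth[OF assms(6)]] by simp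
    moreover have "u (fst q) (snd q) $ m = UU m q" by (simp add: UU_def U_def Defs.comp_def)
    ultimately show "GG \<nu> UU (a m) q = 0" using K4[of UU "Ls m" \<nu> m q, OF sU sL] unfolding a_def by simp
  qed
  show "\<And>x t i. t \<in> {0..T} \<Longrightarrow>
     Gam \<nu> u (comp w i) x t + (\<Sum>j\<in>UNIV. pdx i (comp u j) x t * w x t $ j) = f x t $ i"
  proof -
    fix x t i assume t: "t \<in> {0..T}"
    define M where "M = gradA ell x t"
    define Q where "Q = Qm ell x t"
    have Mdef: "\<And>m j. M $ m $ j = DD (ei j) (a m) (x,t)" by (simp add: M_def gradA_def pdxA)
    have \<delta>: "(\<Sum>m\<in>UNIV. M $ m $ i * Q $ j $ m) = (if j = i then 1 else 0)" for j
    proof -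
      have "(Q ** M) $ j $ i = (if j = i then 1 else 0)"
        using matrix_inv_left'[OF inv[OF t]] by (simp add: Q_def M_def Qm_def mat_def)
      thus ?thesis by (simp add: matrix_matrix_mult_def mult.commute)
    qed
    have G1: "GG \<nu> UU (DD (ei i) (a m)) (x,t) = - (\<Sum>j\<in>UNIV. DD (ei i) (UU j) (x,t) * DD (ei j) (a m) (x,t))" for m
    proof -
      have "\<And>s. GG \<nu> UU (a m) ((x,t) + s *\<^sub>R ei i) = 0"
        by (rule GGa0) (use t in \<open>simp add: ei_def\<close>)
      hence "DD (ei i) (GG \<nu> UU (a m)) (x,t) = 0"
        by (intro DD_zero_line sm_diff GG_smooth sU sa)
      thus ?thesis using K1[of UU "a m" i \<nu> "(x,t)", OF sU sa] by simp
    qed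
    have GV: "GG \<nu> UU (Vs m) (x,t) = 2 * \<nu> * (\<Sum>n\<in>UNIV. \<Sum>k\<in>UNIV. (\<Sum>j\<in>UNIV. Q $ j $ m * DD (ei j) (DD (ei k) (a n)) (x,t)) * DD (ei k) (Vs n) (x,t))
         + (\<Sum>j\<in>UNIV. Q $ j $ m * Fs j (x,t))" for m
    proof -
      have c1: "Cc ell n k m x t = (\<Sum>j\<in>UNIV. Q $ j $ m * DD (ei j) (DD (ei k) (a n)) (x,t))" for n k
        unfolding Cc_def Q_def using pdx2[of "comp (Afield ell) n"] hA sa by simp
      have c2: "pdx k (comp v n) x t = DD (ei k) (Vs n) (x,t)" for k n
        unfolding Vs_def by (rule pdx_DD, rule sm_diff, rule comp_smooth, rule assms(7))
      have c3: "Gam \<nu> u (comp v m) x t = GG \<nu> UU (Vs m) (x,t)"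
        unfolding UU_def Vs_def by (rule Gam_GG, rule comp_smooth, rule assms(7))
      have c4: "f x t $ j = Fs j (x,t)" for j by (simp add: Fs_def U_def Defs.comp_def)
      show ?thesis using v_eq[of t m x, OF t] unfolding c1 c2 c3 c4 Q_def .
    qed
    have L1: "Gam \<nu> u (comp w i) x t = GG \<nu> UU (W i) (x,t)"
    proof -
      have "smooth_fun (U (comp w i))" using hW sW by simp
      from Gam_GG[OF this, of \<nu> u x t] show ?thesis using hW by (simp add: UU_def)
    qed
    have L2: "pdx i (comp u j) x t = DD (ei i) (UU j) (x,t)" for j
      unfolding UU_def by (rule pdx_DD, rule sm_diff, rule comp_smooth, rule assms(4))
    have L3: "w x t $ j = W j (x,t)" for j
      using fun_cong[OF hW[of j], of "(x,t)"] by (simp add: U_def Defs.comp_def)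
    have L4: "f x t $ i = Fs i (x,t)" by (simp add: Fs_def U_def Defs.comp_def)
    define B where "B = (\<lambda>m. DD (ei i) (a m))"
    have sB: "\<And>m. smooth_fun (B m)" unfolding B_def by (rule sm_DD, rule sa)
    have "GG \<nu> UU (W i) (x,t) = (\<Sum>m\<in>UNIV. GG \<nu> UU (\<lambda>q. B m q * Vs m q) (x,t))"
      unfolding W_def B_def by (rule K3[OF sU], rule sm_mult, rule sm_DD, rule sa, rule sV)
    also have "\<dots> = (\<Sum>m\<in>UNIV. GG \<nu> UU (B m) (x,t) * Vs m (x,t) + B m (x,t) * GG \<nu> UU (Vs m) (x,t)
        - 2 * \<nu> * (\<Sum>k\<in>UNIV. DD (ei k) (B m) (x,t) * DD (ei k) (Vs m) (x,t)))"
      by (rule sum.cong[OF refl], rule K2[OF sU sB sV])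
    also have "\<dots> = (\<Sum>m\<in>UNIV. GG \<nu> UU (B m) (x,t) * Vs m (x,t)) + (\<Sum>m\<in>UNIV. B m (x,t) * GG \<nu> UU (Vs m) (x,t))
        - 2 * \<nu> * (\<Sum>m\<in>UNIV. \<Sum>k\<in>UNIV. DD (ei k) (B m) (x,t) * DD (ei k) (Vs m) (x,t))"
      by (simp add: sum.distrib sum_subtractf sum_distrib_left)
    finally have E: "GG \<nu> UU (W i) (x,t) = (\<Sum>m\<in>UNIV. GG \<nu> UU (B m) (x,t) * Vs m (x,t)) + (\<Sum>m\<in>UNIV. B m (x,t) * GG \<nu> UU (Vs m) (x,t))
        - 2 * \<nu> * (\<Sum>m\<in>UNIV. \<Sum>k\<in>UNIV. DD (ei k) (B m) (x,t) * DD (ei k) (Vs m) (x,t))" .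
    have T1: "(\<Sum>m\<in>UNIV. GG \<nu> UU (B m) (x,t) * Vs m (x,t)) = - (\<Sum>j\<in>UNIV. DD (ei i) (UU j) (x,t) * W j (x,t))"
    proof -
      have "(\<Sum>m\<in>UNIV. GG \<nu> UU (B m) (x,t) * Vs m (x,t))
          = - (\<Sum>m\<in>UNIV. \<Sum>j\<in>UNIV. DD (ei i) (UU j) (x,t) * (DD (ei j) (a m) (x,t) * Vs m (x,t)))"
        unfolding B_def G1 by (simp add: sum_distrib_right sum_negf mult.assoc)
      also have "\<dots> = - (\<Sum>j\<in>UNIV. \<Sum>m\<in>UNIV. DD (ei i) (UU j) (x,t) * (DD (ei j) (a m) (x,t) * Vs m (x,t)))"
        by (subst sum.swap) (rule refl)
      also have "\<dots> = - (\<Sum>j\<in>UNIV. DD (ei i) (UU j) (x,t) * W j (x,t))"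
        unfolding W_def by (simp add: sum_distrib_left)
      finally show ?thesis .
    qed
    have T2: "(\<Sum>m\<in>UNIV. B m (x,t) * GG \<nu> UU (Vs m) (x,t)) = 
        2 * \<nu> * (\<Sum>n\<in>UNIV. \<Sum>k\<in>UNIV. DD (ei i) (DD (ei k) (a n)) (x,t) * DD (ei k) (Vs n) (x,t)) + Fs i (x,t)"
    proof -
      have "B m (x,t) = M $ m $ i" for m unfolding B_def Mdef ..
      hence "(\<Sum>m\<in>UNIV. B m (x,t) * GG \<nu> UU (Vs m) (x,t)) = (\<Sum>m\<in>UNIV. M $ m $ i * GG \<nu> UU (Vs m) (x,t))" by simp
      also have "\<dots> = 2 * \<nu> * (\<Sum>n\<in>UNIV. \<Sum>k\<in>UNIV. DD (ei i) (DD (ei k) (a n)) (x,t) * DD (ei k) (Vs n) (x,t)) + Fs i (x,t)"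
        unfolding GV
        by (rule alg2[where M="\<lambda>m i. M $ m $ i" and Q="\<lambda>j m. Q $ j $ m" and X="\<lambda>j k n. DD (ei j) (DD (ei k) (a n)) (x,t)"
              and Y="\<lambda>k n. DD (ei k) (Vs n) (x,t)" and F="\<lambda>j. Fs j (x,t)", OF \<delta>])
      finally show ?thesis .
    qed
    have T3: "(\<Sum>m\<in>UNIV. \<Sum>k\<in>UNIV. DD (ei k) (B m) (x,t) * DD (ei k) (Vs m) (x,t))
        = (\<Sum>n\<in>UNIV. \<Sum>k\<in>UNIV. DD (ei i) (DD (ei k) (a n)) (x,t) * DD (ei k) (Vs n) (x,t))"
      unfolding B_def using schwarz_fun[OF sa] by simp
    show "Gam \<nu> u (comp w i) x t + (\<Sum>j\<in>UNIV. pdx i (comp u j) x t * w x t $ j) = f x t $ i"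
      unfolding L1 L2 L3 L4 E T1 T2 T3 by simp
  qed
qed

end
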